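(* Let $\alpha_a$ be a labeled dGL hybrid game, $\varphi$ a dGL formula, and $S$ an Angelic subvalue map for $\alpha_a$ compatible with $\varphi$, i.e. $\models S(b)\rightarrow\langle \mathrm{suffix}_b(\alpha_a)\rangle S(\mathsf{end})$ for every $b\in\mathrm{nodes}(\alpha_a)$ and $\models S(\mathsf{end})\rightarrow\varphi$. Then for every subgame label $b\in\mathrm{nodes}(\alpha_a)$, every state satisfying $S(a)$ satisfies $$\big\langle \mathrm{prefix}_b(\mathcal{U}(\alpha_a,S))\big\rangle\,\big\langle \mathrm{suffix}_b(\alpha_a)\big\rangle\,\varphi .$$
   Context: Differential game logic (dGL). Hybrid games are generated by $\alpha,\beta ::= x:=e \mid \alpha;\beta \mid ?Q \mid \{x'=f(x)\,\&\,Q\} \mid \alpha^{*} \mid \alpha\cup\beta \mid x:=* \mid\ !Q \mid \{x'=f(x)\,\&\,Q\}^{d} \mid \alpha^{\times} \mid \alpha\cap\beta \mid x:=\otimes$, with $x$ a real variable (vector for ODEs), $e,f(x)$ polynomial terms, $Q$ a formula. Players Angel and Demon: $x:=e$ deterministic assignment; in $x:=*$ Angel (in $x:=\otimes$ Demon) assigns any real to $x$; in $\{x'=f(x)\&Q\}$ Angel (in $\{x'=f(x)\&Q\}^d$ Demon) chooses a duration $r\ge 0$ of following the ODE with $Q$ true throughout; $?Q$ makes Angel lose and $!Q$ makes Demon lose if $Q$ is false (no effect otherwise); in $\alpha\cup\beta$ Angel (in $\alpha\cap\beta$ Demon) chooses the branch; in $\alpha^*$ Angel (in $\alpha^\times$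 Demon) decides before each iteration whether to repeat $\alpha$ or stop; $\alpha;\beta$ is sequential composition. $\mathrm{skip}$ denotes $?\mathit{true}$. Formulas: polynomial (in)equalities closed under connectives, real quantifiers, and modalities $\langle\alpha\rangle\varphi$ (Angel has a winning strategy in $\alpha$ to reach $\varphi$ whatever Demon does) and $[\alpha]\varphi\equiv\neg\langle\alpha\rangle\neg\varphi$, with the standard dGL semantics: $\langle x:=e\rangle\varphi\leftrightarrow\varphi(x\mapsto e)$, $\langle x:=*\rangle\varphi\leftrightarrow\exists x\varphi$, $\langle x:=\otimes\rangle\varphi\leftrightarrow\forall x\varphi$, $\langle ?Q\rangle\varphi\leftrightarrow Q\wedge\varphi$, $\langle !Q\rangle\varphi\leftrightarrow(Q\rightarrow\varphi)$, $\langle\alpha\cup\beta\rangle\varphi\leftrightarrow\langle\alpha\rangle\varphi\vee\langle\beta\rangle\varphi$, $\langle\alpha\cap\beta\rangle\varphi\leftrightarrow\langle\alpha\rangle\varphi\wedge\langle\beta\rangle\varphi$, $\langle\alpha;\beta\rangle\varphi\leftrightarrow\langle\alpha\rangle\langle\beta\rangle\varphi$; the Angel ODE holds iff some solution of some duration $r\ge0$ staying in $Q$ ends in $\varphi$, the Demon ODE iff all such solutions end in $\varphi$; $\langle\alpha^*\rangle\varphi$ denotes the least set $Z$ of states with $[\![\varphi]\!]\cup\varsigma_\alpha(Z)\subseteq Z$ and $\langle\alpha^\times\rangle\varphi$ the greatest $Z$ with $Z\subseteq[\![\varphi]\!]\cap\varsigma_\alpha(Z)$, where $\varsigma_\alpha(Z)$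 is Angel's winning region in $\alpha$ for goal $Z$. $\models\psi$ means $\psi$ is valid. Labels. Every node of the syntax tree of a game carries a unique label (equal subgames at different positions get different labels). $\alpha_a$ is a game whose root has label $a$; $\mathrm{nodes}(\alpha_a)$ is the set of labels of its subgames (including $a$). A special label $\mathsf{end}\notin\mathrm{nodes}(\alpha_a)$ is used. A map $S$ assigns formulas to a set of labels containing $\mathrm{nodes}(\alpha_a)\cup\{\mathsf{end}\}$; $S\{\mathsf{end}\mapsto Q\}$ is $S$ with the value at $\mathsf{end}$ replaced by $Q$. Below $\gamma_g,\delta_d$ denote immediate subgames with root labels $g,d$. Game suffix $\mathrm{suffix}_b(\alpha_a)$ for $b\in\mathrm{nodes}(\alpha_a)$: if $b=a$, it is $\alpha_a$. Otherwise: for $\alpha_a=((\gamma_g)^* )_a$ or $((\gamma_g)^\times)_a$ it is $\mathrm{suffix}_b(\gamma_g);\alpha_a$; for $(\gamma_g\cup\delta_d)_a$ or $(\gamma_g\cap\delta_d)_a$ it is $\mathrm{suffix}_b(\gamma_g)$ if $b\in\mathrm{nodes}(\gamma_g)$ and $\mathrm{suffix}_b(\delta_d)$ otherwise; for $(\gamma_g;\delta_d)_a$ it is $\mathrm{suffix}_b(\gamma_g);\delta_d$ if $b\in\mathrm{nodes}(\gamma_g)$ and $\mathrm{suffix}_b(\delta_d)$ otherwise. Game prefix $\mathrm{prefix}_b(\alpha_a)$ for $b\in\mathrm{nodes}(\alpha_a)$: if $b=a$ and $\alpha$ is not a loop, it is $\mathrm{skip}$; if $b=a$ and $\alpha$ is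 a loop ($^*$ or $^\times$), it is $\alpha_a$. Otherwise: for loops $((\gamma_g)^* )_a$, $((\gamma_g)^\times)_a$ it is $\alpha_a;\mathrm{prefix}_b(\gamma_g)$; for $\cup,\cap$ it is the prefix within the branch containing $b$; for $(\gamma_g;\delta_d)_a$ it is $\mathrm{prefix}_b(\gamma_g)$ if $b\in\mathrm{nodes}(\gamma_g)$ and $\gamma_g;\mathrm{prefix}_b(\delta_d)$ otherwise. Angelic subvalue map: a map $S$ with $\models S(b)\rightarrow\langle\mathrm{suffix}_b(\alpha_a)\rangle S(\mathsf{end})$ for all $b\in\mathrm{nodes}(\alpha_a)$; it is compatible with $\varphi$ if $\models S(\mathsf{end})\rightarrow\varphi$. Universal projection $\mathcal{U}(\alpha_a,S)$, defined recursively: $(x:=* )_a\mapsto (x:=\otimes)_a;\,!S(\mathsf{end})$; $\{x'=f(x)\&Q\}_a\mapsto(\{x'=f(x)\&Q\}^d)_a;\,!S(\mathsf{end})$; $(\gamma_g\cup\delta_d)_a\mapsto(!S(g);\mathcal{U}(\gamma_g,S))\cap_a(!S(d);\mathcal{U}(\delta_d,S))$; $((\gamma_g)^* )_a\mapsto\big((!S(g);\mathcal{U}(\gamma_g,S\{\mathsf{end}\mapsto S(a)\}))^{\times}\big)_a;\,!S(\mathsf{end})$; $(\gamma_g;\delta_d)_a\mapsto\mathcal{U}(\gamma_g,S\{\mathsf{end}\mapsto S(d)\});_a\,\mathcal{U}(\delta_d,S)$; $(\gamma_g\cap\delta_d)_a\mapsto\mathcal{U}(\gamma_g,S)\cap_a\mathcal{U}(\delta_d,S)$;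 $((\gamma_g)^\times)_a\mapsto(\mathcal{U}(\gamma_g,S\{\mathsf{end}\mapsto S(a)\})^\times)_a$; $x:=e$, $x:=\otimes$, $?Q$, $!Q$, $\{x'=f(x)\&Q\}^d$ are left unchanged. Labels are preserved (the node replacing the node labeled $a$, e.g. the Demon counterpart $x:=\otimes$, the dual ODE, $\cap$, or the loop $^\times$, keeps label $a$; subgames keep their labels) and newly introduced nodes get fresh labels. *)

theory Defs
  imports "HOL-Analysis.Analysis"
begin

section \<open>Syntax of dGL\<close>

type_synonym var = nat
type_synonym state = "var \<Rightarrow> real"

datatype trm = Var var | Const rat | Neg trm | Plus trm trm | Times trm trm

text \<open>Unlabeled hybrid games and dGL formulas (mutually recursive).
  An ODE system x' = f(x) is a list of pairs (x_i, f_i(x)).\<close>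
datatype fml =
    TrueF | FalseF
  | Geq trm trm | Gt trm trm | Equal trm trm
  | NotF fml | AndF fml fml | OrF fml fml | ImpF fml fml | IffF fml fml
  | ExistsF var fml | ForallF var fml
  | Dia game fml | Box game fml
and game =
    Assign var trm
  | AssignAny var
  | AssignDemon var
  | Test fml
  | DTest fml
  | ODE "(var \<times> trm) list" fml
  | DODE "(var \<times> trm) list" fml
  | Seq game game
  | Choice game game
  | DChoice game game
  | Star game
  | Cross game

definition Skip :: game where "Skip = Test TrueF"

section \<open>Semantics\<close>

primrec tsem :: "trm \<Rightarrow> state \<Rightarrow> real" where
  "tsem (Var x) w = w x"
| "tsem (Const c) w = of_rat c"
| "tsem (Neg e) w = - tsem e w"
| "tsem (Plus e f) w = tsem e w + tsem f w"
| "tsem (Times e f) w = tsem e w * tsem f w"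

definition ode_sol :: "(var \<times> trm) list \<Rightarrow> state set \<Rightarrow> state \<Rightarrow> real \<Rightarrow> (real \<Rightarrow> state) \<Rightarrow> bool" where
  "ode_sol xs D w r y \<longleftrightarrow>
     0 \<le> r \<and> y 0 = w
   \<and> (\<forall>t\<in>{0..r}. y t \<in> D)
   \<and> (\<forall>t\<in>{0..r}. \<forall>z. z \<notin> fst ` set xs \<longrightarrow> y t z = w z)
   \<and> (\<forall>(x,\<theta>)\<in>set xs. \<forall>t\<in>{0..r}.
        ((\<lambda>s. y s x) has_real_derivative tsem \<theta> (y t)) (at t within {0..r}))"

primrec fsem :: "fml \<Rightarrow> state set" and win :: "game \<Rightarrow> state set \<Rightarrow> state set" where
  "fsem TrueF = UNIV"
| "fsem FalseF = {}"
| "fsem (Geq e f) = {w. tsem e w \<ge> tsem f w}"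
| "fsem (Gt e f) = {w. tsem e w > tsem f w}"
| "fsem (Equal e f) = {w. tsem e w = tsem f w}"
| "fsem (NotF p) = - fsem p"
| "fsem (AndF p q) = fsem p \<inter> fsem q"
| "fsem (OrF p q) = fsem p \<union> fsem q"
| "fsem (ImpF p q) = - fsem p \<union> fsem q"
| "fsem (IffF p q) = {w. w \<in> fsem p \<longleftrightarrow> w \<in> fsem q}"
| "fsem (ExistsF x p) = {w. \<exists>v. w(x := v) \<in> fsem p}"
| "fsem (ForallF x p) = {w. \<forall>v. w(x := v) \<in> fsem p}"
| "fsem (Dia a p) = win a (fsem p)"
| "fsem (Box a p) = - win a (- fsem p)"
| "win (Assign x e) X = {w. w(x := tsem e w) \<in> X}"
| "win (AssignAny x) X = {w. \<exists>v. w(x := v) \<in> X}"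
| "win (AssignDemon x) X = {w. \<forall>v. w(x := v) \<in> X}"
| "win (Test Q) X = fsem Q \<inter> X"
| "win (DTest Q) X = - fsem Q \<union> X"
| "win (ODE xs Q) X = {w. \<exists>r y. ode_sol xs (fsem Q) w r y \<and> y r \<in> X}"
| "win (DODE xs Q) X = {w. \<forall>r y. ode_sol xs (fsem Q) w r y \<longrightarrow> y r \<in> X}"
| "win (Seq a b) X = win a (win b X)"
| "win (Choice a b) X = win a X \<union> win b X"
| "win (DChoice a b) X = win a X \<inter> win b X"
| "win (Star a) X = lfp (\<lambda>Z. X \<union> win a Z)"
| "win (Cross a) X = gfp (\<lambda>Z. X \<inter> win a Z)"

definition valid :: "fml \<Rightarrow> bool" where
  "valid p \<longleftrightarrow> (\<forall>w. w \<in> fsem p)"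

section \<open>Labeled games\<close>

datatype 'l lgame =
    LAssign 'l var trm
  | LAssignAny 'l var
  | LAssignDemon 'l var
  | LTest 'l fml
  | LDTest 'l fml
  | LODE 'l "(var \<times> trm) list" fml
  | LDODE 'l "(var \<times> trm) list" fml
  | LSeq 'l "'l lgame" "'l lgame"
  | LChoice 'l "'l lgame" "'l lgame"
  | LDChoice 'l "'l lgame" "'l lgame"
  | LStar 'l "'l lgame"
  | LCross 'l "'l lgame"

primrec label :: "'l lgame \<Rightarrow> 'l" where
  "label (LAssign a x e) = a"
| "label (LAssignAny a x) = a"
| "label (LAssignDemon a x) = a"
| "label (LTest a Q) = a"
| "label (LDTest a Q) = a"
| "label (LODE a xs Q) = a"
| "label (LDODE a xs Q) = a"
| "label (LSeq a g d) = a"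
| "label (LChoice a g d) = a"
| "label (LDChoice a g d) = a"
| "label (LStar a g) = a"
| "label (LCross a g) = a"

primrec labels :: "'l lgame \<Rightarrow> 'l list" where
  "labels (LAssign a x e) = [a]"
| "labels (LAssignAny a x) = [a]"
| "labels (LAssignDemon a x) = [a]"
| "labels (LTest a Q) = [a]"
| "labels (LDTest a Q) = [a]"
| "labels (LODE a xs Q) = [a]"
| "labels (LDODE a xs Q) = [a]"
| "labels (LSeq a g d) = a # labels g @ labels d"
| "labels (LChoice a g d) = a # labels g @ labels d"
| "labels (LDChoice a g d) = a # labels g @ labels d"
| "labels (LStar a g) = a # labels g"
| "labels (LCross a g) = a # labels g"

definition nodes :: "'l lgame \<Rightarrow> 'l set" where
  "nodes g = set (labels g)"

definition well_labeled :: "'l lgame \<Rightarrow> bool" where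
  "well_labeled g \<longleftrightarrow> distinct (labels g)"

primrec erase :: "'l lgame \<Rightarrow> game" where
  "erase (LAssign a x e) = Assign x e"
| "erase (LAssignAny a x) = AssignAny x"
| "erase (LAssignDemon a x) = AssignDemon x"
| "erase (LTest a Q) = Test Q"
| "erase (LDTest a Q) = DTest Q"
| "erase (LODE a xs Q) = ODE xs Q"
| "erase (LDODE a xs Q) = DODE xs Q"
| "erase (LSeq a g d) = Seq (erase g) (erase d)"
| "erase (LChoice a g d) = Choice (erase g) (erase d)"
| "erase (LDChoice a g d) = DChoice (erase g) (erase d)"
| "erase (LStar a g) = Star (erase g)"
| "erase (LCross a g) = Cross (erase g)"

section \<open>Game suffix and prefix\<close>

text \<open>Suffixes and prefixes are only used inside modalities, so they are
  returned as (unlabeled) games.\<close>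
fun suffix :: "'l \<Rightarrow> 'l lgame \<Rightarrow> game" where
  "suffix b (LStar a g) =
     (if b = a then Star (erase g) else Seq (suffix b g) (Star (erase g)))"
| "suffix b (LCross a g) =
     (if b = a then Cross (erase g) else Seq (suffix b g) (Cross (erase g)))"
| "suffix b (LChoice a g d) =
     (if b = a then Choice (erase g) (erase d)
      else if b \<in> nodes g then suffix b g else suffix b d)"
| "suffix b (LDChoice a g d) =
     (if b = a then DChoice (erase g) (erase d)
      else if b \<in> nodes g then suffix b g else suffix b d)"
| "suffix b (LSeq a g d) =
     (if b = a then Seq (erase g) (erase d)
      else if b \<in> nodes g then Seq (suffix b g) (erase d) else suffix b d)"
| "suffix b g = erase g"

fun prefix :: "'l \<Rightarrow> 'l lgame \<Rightarrow> game" where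
  "prefix b (LStar a g) =
     (if b = a then Star (erase g) else Seq (Star (erase g)) (prefix b g))"
| "prefix b (LCross a g) =
     (if b = a then Cross (erase g) else Seq (Cross (erase g)) (prefix b g))"
| "prefix b (LChoice a g d) =
     (if b = a then Skip else if b \<in> nodes g then prefix b g else prefix b d)"
| "prefix b (LDChoice a g d) =
     (if b = a then Skip else if b \<in> nodes g then prefix b g else prefix b d)"
| "prefix b (LSeq a g d) =
     (if b = a then Skip
      else if b \<in> nodes g then prefix b g else Seq (erase g) (prefix b d))"
| "prefix b g = Skip"

section \<open>Subvalue maps and universal projection\<close>

datatype 'l key = L 'l | End

definition angelic_subvalue_map :: "'l lgame \<Rightarrow> ('l key \<Rightarrow> fml) \<Rightarrow> bool" where
  "angelic_subvalue_map \<alpha> S \<longleftrightarrow>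
     (\<forall>b\<in>nodes \<alpha>. valid (ImpF (S (L b)) (Dia (suffix b \<alpha>) (S End))))"

definition compatible :: "('l key \<Rightarrow> fml) \<Rightarrow> fml \<Rightarrow> bool" where
  "compatible S \<phi> \<longleftrightarrow> valid (ImpF (S End) \<phi>)"

text \<open>Labels of the projected game: original labels are kept (Orig a),
  and the i-th node newly introduced when projecting the node labeled a
  gets the fresh label Fresh a i (fresh since labels of \<alpha> are unique).\<close>
datatype 'l plabel = Orig 'l | Fresh 'l nat

primrec relabel :: "'l lgame \<Rightarrow> 'l plabel lgame" where
  "relabel (LAssign a x e) = LAssign (Orig a) x e"
| "relabel (LAssignAny a x) = LAssignAny (Orig a) x"
| "relabel (LAssignDemon a x) = LAssignDemon (Orig a) x"
| "relabel (LTest a Q) = LTest (Orig a) Q"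
| "relabel (LDTest a Q) = LDTest (Orig a) Q"
| "relabel (LODE a xs Q) = LODE (Orig a) xs Q"
| "relabel (LDODE a xs Q) = LDODE (Orig a) xs Q"
| "relabel (LSeq a g d) = LSeq (Orig a) (relabel g) (relabel d)"
| "relabel (LChoice a g d) = LChoice (Orig a) (relabel g) (relabel d)"
| "relabel (LDChoice a g d) = LDChoice (Orig a) (relabel g) (relabel d)"
| "relabel (LStar a g) = LStar (Orig a) (relabel g)"
| "relabel (LCross a g) = LCross (Orig a) (relabel g)"

primrec uproj :: "'l lgame \<Rightarrow> ('l key \<Rightarrow> fml) \<Rightarrow> 'l plabel lgame" where
  "uproj (LAssign a x e) S = LAssign (Orig a) x e"
| "uproj (LAssignAny a x) S =
     LSeq (Fresh a 0) (LAssignDemon (Orig a) x) (LDTest (Fresh a 1) (S End))"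
| "uproj (LAssignDemon a x) S = LAssignDemon (Orig a) x"
| "uproj (LTest a Q) S = LTest (Orig a) Q"
| "uproj (LDTest a Q) S = LDTest (Orig a) Q"
| "uproj (LODE a xs Q) S =
     LSeq (Fresh a 0) (LDODE (Orig a) xs Q) (LDTest (Fresh a 1) (S End))"
| "uproj (LDODE a xs Q) S = LDODE (Orig a) xs Q"
| "uproj (LSeq a g d) S =
     LSeq (Orig a) (uproj g (S(End := S (L (label d))))) (uproj d S)"
| "uproj (LChoice a g d) S =
     LDChoice (Orig a)
       (LSeq (Fresh a 0) (LDTest (Fresh a 1) (S (L (label g)))) (uproj g S))
       (LSeq (Fresh a 2) (LDTest (Fresh a 3) (S (L (label d)))) (uproj d S))"
| "uproj (LDChoice a g d) S = LDChoice (Orig a) (uproj g S) (uproj d S)"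
| "uproj (LStar a g) S =
     LSeq (Fresh a 0)
       (LCross (Orig a)
          (LSeq (Fresh a 1) (LDTest (Fresh a 2) (S (L (label g))))
             (uproj g (S(End := S (L a))))))
       (LDTest (Fresh a 3) (S End))"
| "uproj (LCross a g) S = LCross (Orig a) (uproj g (S(End := S (L a))))"

end

theory Submission
  imports Defs
begin

lemma win_mono: "X \<subseteq> Y \<Longrightarrow> win G X \<subseteq> win G Y"
proof (induction G arbitrary: X Y)
  case (Star G)
  then show ?case by simp (rule lfp_mono; blast)
next
  case (Cross G)
  then show ?case by simp (rule gfp_mono; blast)
next
  case (Seq G1 G2) then show ?case by simp
next
  case (Choice G1 G2) then show ?case by (simp only: win.simps) (rule Un_mono; blast)
next
  case (DChoice G1 G2) then show ?case by (simp only: win.simps) (rule Int_mono; blast)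
qed fastforce+

lemma win_Skip[simp]: "win Skip X = X" by (simp add: Skip_def)

lemma mono_star: "mono (\<lambda>Z. X \<union> win g Z)"
  by (rule monoI) (use win_mono in blast)
lemma mono_cross: "mono (\<lambda>Z. X \<inter> win g Z)"
  by (rule monoI) (use win_mono in blast)

lemma win_Star_unfold: "win (Star g) X = X \<union> win g (win (Star g) X)"
  using lfp_unfold[OF mono_star] by simp
lemma win_Cross_unfold: "win (Cross g) X = X \<inter> win g (win (Cross g) X)"
  using gfp_unfold[OF mono_cross] by simp
lemma win_Cross_coind: "Z \<subseteq> X \<Longrightarrow> Z \<subseteq> win g Z \<Longrightarrow> Z \<subseteq> win (Cross g) X"
  by (simp add: gfp_upperbound)

lemma suffix_root[simp]: "suffix (label a) a = erase a"
  by (cases a) auto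

lemma nodes_uproj: "Orig b \<in> nodes (uproj a S) \<longleftrightarrow> b \<in> nodes a"
  by (induction a arbitrary: S) (auto simp: nodes_def)

lemma wl_sub:
  "well_labeled (LSeq a g d) \<Longrightarrow> well_labeled g \<and> well_labeled d \<and> a \<notin> nodes g \<and> a \<notin> nodes d \<and> nodes g \<inter> nodes d = {}"
  "well_labeled (LChoice a g d) \<Longrightarrow> well_labeled g \<and> well_labeled d \<and> a \<notin> nodes g \<and> a \<notin> nodes d \<and> nodes g \<inter> nodes d = {}"
  "well_labeled (LDChoice a g d) \<Longrightarrow> well_labeled g \<and> well_labeled d \<and> a \<notin> nodes g \<and> a \<notin> nodes d \<and> nodes g \<inter> nodes d = {}"
  "well_labeled (LStar a g) \<Longrightarrow> well_labeled g \<and> a \<notin> nodes g"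
  "well_labeled (LCross a g) \<Longrightarrow> well_labeled g \<and> a \<notin> nodes g"
  by (auto simp: well_labeled_def nodes_def)

lemma nodes_simps[simp]:
  "nodes (LSeq a g d) = insert a (nodes g \<union> nodes d)"
  "nodes (LChoice a g d) = insert a (nodes g \<union> nodes d)"
  "nodes (LDChoice a g d) = insert a (nodes g \<union> nodes d)"
  "nodes (LStar a g) = insert a (nodes g)"
  "nodes (LCross a g) = insert a (nodes g)"
  by (auto simp: nodes_def)

lemma nodes_leaf[simp]:
  "nodes (LAssign a x e) = {a}" "nodes (LAssignAny a x) = {a}" "nodes (LAssignDemon a x) = {a}"
  "nodes (LTest a Q) = {a}" "nodes (LDTest a Q) = {a}" "nodes (LODE a xs Q) = {a}" "nodes (LDODE a xs Q) = {a}"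
  by (auto simp: nodes_def)

lemma label_in: "label a \<in> nodes a" by (cases a) (auto simp: nodes_def)

lemma sfx_seq1: "p \<noteq> a \<Longrightarrow> p \<in> nodes g \<Longrightarrow> suffix p (LSeq a g d) = Seq (suffix p g) (erase d)" by simp
lemma sfx_seq2: "p \<noteq> a \<Longrightarrow> p \<notin> nodes g \<Longrightarrow> suffix p (LSeq a g d) = suffix p d" by simp
lemma sfx_ch1: "p \<noteq> a \<Longrightarrow> p \<in> nodes g \<Longrightarrow> suffix p (LChoice a g d) = suffix p g" by simp
lemma sfx_ch2: "p \<noteq> a \<Longrightarrow> p \<notin> nodes g \<Longrightarrow> suffix p (LChoice a g d) = suffix p d" by simp
lemma sfx_dch1: "p \<noteq> a \<Longrightarrow> p \<in> nodes g \<Longrightarrow> suffix p (LDChoice a g d) = suffix p g" by simp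
lemma sfx_dch2: "p \<noteq> a \<Longrightarrow> p \<notin> nodes g \<Longrightarrow> suffix p (LDChoice a g d) = suffix p d" by simp
lemma sfx_star: "p \<noteq> a \<Longrightarrow> suffix p (LStar a g) = Seq (suffix p g) (Star (erase g))" by simp
lemma sfx_cross: "p \<noteq> a \<Longrightarrow> suffix p (LCross a g) = Seq (suffix p g) (Cross (erase g))" by simp

lemma F:
  assumes "well_labeled a" "fsem (S End) \<subseteq> K"
    "\<forall>p\<in>nodes a. fsem (S (L p)) \<subseteq> win (suffix p a) K"
  shows "win (erase a) K \<subseteq> win (erase (uproj a S)) K"
  using assms
proof (induction a arbitrary: S K)
  case (LSeq a g d)
  note wl = wl_sub(1)[OF LSeq.prems(1)]
  have H: "\<And>p. p \<in> nodes (LSeq a g d) \<Longrightarrow> fsem (S (L p)) \<subseteq> win (suffix p (LSeq a g d)) K"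
    using LSeq.prems(3) by blast
  have d: "win (erase d) K \<subseteq> win (erase (uproj d S)) K"
  proof (rule LSeq.IH(2))
    show "\<forall>p\<in>nodes d. fsem (S (L p)) \<subseteq> win (suffix p d) K"
    proof
      fix p assume p: "p \<in> nodes d"
      have pa: "p \<noteq> a" "p \<notin> nodes g" using wl p by auto
      show "fsem (S (L p)) \<subseteq> win (suffix p d) K" using H[of p] p pa by simp
    qed
  qed (use wl LSeq.prems in auto)
  have g: "win (erase g) (win (erase d) K) \<subseteq> win (erase (uproj g (S(End := S (L (label d)))))) (win (erase d) K)"
  proof (rule LSeq.IH(1))
    show "\<forall>p\<in>nodes g. fsem ((S(End := S (L (label d)))) (L p)) \<subseteq> win (suffix p g) (win (erase d) K)"
    proof
      fix p assume p: "p \<in> nodes g"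
      have pa: "p \<noteq> a" using wl p by auto
      show "fsem ((S(End := S (L (label d)))) (L p)) \<subseteq> win (suffix p g) (win (erase d) K)" using H[of p] p pa by simp
    qed
    have ld: "label d \<in> nodes d" by (rule label_in)
    have pa: "label d \<noteq> a" "label d \<notin> nodes g" using wl ld by auto
    show "fsem ((S(End := S (L (label d)))) End) \<subseteq> win (erase d) K"
      using H[of "label d"] ld pa by simp
  qed (use wl in auto)
  show ?case using g win_mono[OF d] by auto
next
  case (LChoice a g d)
  note wl = wl_sub(2)[OF LChoice.prems(1)]
  have H: "\<And>p. p \<in> nodes (LChoice a g d) \<Longrightarrow> fsem (S (L p)) \<subseteq> win (suffix p (LChoice a g d)) K"
    using LChoice.prems(3) by blast
  have Hd: "\<And>p. p \<in> nodes d \<Longrightarrow> fsem (S (L p)) \<subseteq> win (suffix p d) K"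
  proof -
    fix p assume p: "p \<in> nodes d"
    have pa: "p \<noteq> a" "p \<notin> nodes g" using wl p by auto
    show "fsem (S (L p)) \<subseteq> win (suffix p d) K" using H[of p] p pa by simp
  qed
  have Hg: "\<And>p. p \<in> nodes g \<Longrightarrow> fsem (S (L p)) \<subseteq> win (suffix p g) K"
  proof -
    fix p assume p: "p \<in> nodes g"
    have pa: "p \<noteq> a" using wl p by auto
    show "fsem (S (L p)) \<subseteq> win (suffix p g) K" using H[of p] p pa by simp
  qed
  have d: "win (erase d) K \<subseteq> win (erase (uproj d S)) K"
    by (rule LChoice.IH(2)) (use wl LChoice.prems Hd in auto)
  have g: "win (erase g) K \<subseteq> win (erase (uproj g S)) K"
    by (rule LChoice.IH(1)) (use wl LChoice.prems Hg in auto)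
  have sg: "fsem (S (L (label g))) \<subseteq> win (erase g) K"
    using Hg[of "label g"] label_in[of g] by simp
  have sd: "fsem (S (L (label d))) \<subseteq> win (erase d) K"
    using Hd[of "label d"] label_in[of d] by simp
  show ?case using g d sg sd by auto
next
  case (LDChoice a g d)
  note wl = wl_sub(3)[OF LDChoice.prems(1)]
  have H: "\<And>p. p \<in> nodes (LDChoice a g d) \<Longrightarrow> fsem (S (L p)) \<subseteq> win (suffix p (LDChoice a g d)) K"
    using LDChoice.prems(3) by blast
  have Hd: "\<And>p. p \<in> nodes d \<Longrightarrow> fsem (S (L p)) \<subseteq> win (suffix p d) K"
  proof -
    fix p assume p: "p \<in> nodes d"
    have pa: "p \<noteq> a" "p \<notin> nodes g" using wl p by auto
    show "fsem (S (L p)) \<subseteq> win (suffix p d) K" using H[of p] p pa by simp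
  qed
  have Hg: "\<And>p. p \<in> nodes g \<Longrightarrow> fsem (S (L p)) \<subseteq> win (suffix p g) K"
  proof -
    fix p assume p: "p \<in> nodes g"
    have pa: "p \<noteq> a" using wl p by auto
    show "fsem (S (L p)) \<subseteq> win (suffix p g) K" using H[of p] p pa by simp
  qed
  have d: "win (erase d) K \<subseteq> win (erase (uproj d S)) K"
    by (rule LDChoice.IH(2)) (use wl LDChoice.prems Hd in auto)
  have g: "win (erase g) K \<subseteq> win (erase (uproj g S)) K"
    by (rule LDChoice.IH(1)) (use wl LDChoice.prems Hg in auto)
  show ?case using g d by auto
next
  case (LStar a g)
  note wl = wl_sub(4)[OF LStar.prems(1)]
  let ?S = "S(End := S (L a))"
  let ?W = "win (Star (erase g)) K"
  have H: "\<And>p. p \<in> nodes (LStar a g) \<Longrightarrow> fsem (S (L p)) \<subseteq> win (suffix p (LStar a g)) K"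
    using LStar.prems(3) by blast
  have Hg: "\<And>p. p \<in> nodes g \<Longrightarrow> fsem (S (L p)) \<subseteq> win (suffix p g) ?W"
  proof -
    fix p assume p: "p \<in> nodes g"
    have pa: "p \<noteq> a" using wl p by auto
    show "fsem (S (L p)) \<subseteq> win (suffix p g) ?W" using H[of p] p pa by simp
  qed
  have g: "win (erase g) UNIV \<subseteq> win (erase (uproj g ?S)) UNIV"
  proof (rule LStar.IH)
    show "\<forall>p\<in>nodes g. fsem (?S (L p)) \<subseteq> win (suffix p g) UNIV"
    proof
      fix p assume p: "p \<in> nodes g"
      then have "fsem (S (L p)) \<subseteq> win (suffix p g) ?W" by (rule Hg)
      also have "\<dots> \<subseteq> win (suffix p g) UNIV" by (rule win_mono) auto
      finally show "fsem (?S (L p)) \<subseteq> win (suffix p g) UNIV" by simp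
    qed
  qed (use wl in auto)
  have sg: "fsem (S (L (label g))) \<subseteq> win (erase g) UNIV"
  proof -
    have "fsem (S (L (label g))) \<subseteq> win (erase g) ?W"
      using Hg[of "label g"] label_in[of g] by simp
    also have "\<dots> \<subseteq> win (erase g) UNIV" by (rule win_mono) auto
    finally show ?thesis .
  qed
  have "UNIV \<subseteq> win (Cross (Seq (DTest (S (L (label g)))) (erase (uproj g ?S)))) (- fsem (S End) \<union> K)"
    by (rule win_Cross_coind) (use g sg LStar.prems(2) in auto)
  then show ?case by auto
next
  case (LCross a g)
  note wl = wl_sub(5)[OF LCross.prems(1)]
  let ?S = "S(End := S (L a))"
  let ?W = "win (Cross (erase g)) K"
  have H: "\<And>p. p \<in> nodes (LCross a g) \<Longrightarrow> fsem (S (L p)) \<subseteq> win (suffix p (LCross a g)) K"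
    using LCross.prems(3) by blast
  have Hg: "\<And>p. p \<in> nodes g \<Longrightarrow> fsem (S (L p)) \<subseteq> win (suffix p g) ?W"
  proof -
    fix p assume p: "p \<in> nodes g"
    have pa: "p \<noteq> a" using wl p by auto
    show "fsem (S (L p)) \<subseteq> win (suffix p g) ?W" using H[of p] p pa by simp
  qed
  have g: "win (erase g) ?W \<subseteq> win (erase (uproj g ?S)) ?W"
  proof (rule LCross.IH)
    show "fsem (?S End) \<subseteq> ?W" using H[of a] by simp
  qed (use wl Hg in auto)
  have "?W \<subseteq> win (Cross (erase (uproj g ?S))) K"
    apply (rule win_Cross_coind)
    using win_Cross_unfold[of "erase g" K] g by blast+
  then show ?case by simp
qed (use subset_eq in auto)

lemma P:
  assumes "well_labeled a" "fsem (S End) \<subseteq> K"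
    "\<forall>p\<in>nodes a. fsem (S (L p)) \<subseteq> win (suffix p a) K"
  shows "\<forall>b\<in>nodes a. win (erase a) K \<subseteq> win (prefix (Orig b) (uproj a S)) (win (suffix b a) K)"
  using assms
proof (induction a arbitrary: S K)
  case (LSeq a g d)
  note wl = wl_sub(1)[OF LSeq.prems(1)]
  let ?S = "S(End := S (L (label d)))"
  let ?K = "win (erase d) K"
  have H: "\<And>p. p \<in> nodes (LSeq a g d) \<Longrightarrow> fsem (S (L p)) \<subseteq> win (suffix p (LSeq a g d)) K"
    using LSeq.prems(3) by blast
  have Hd: "\<forall>p\<in>nodes d. fsem (S (L p)) \<subseteq> win (suffix p d) K"
  proof
    fix p assume p: "p \<in> nodes d"
    have pa: "p \<noteq> a" "p \<notin> nodes g" using wl p by auto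
    show "fsem (S (L p)) \<subseteq> win (suffix p d) K" using H[of p] p pa by simp
  qed
  have Hg: "\<forall>p\<in>nodes g. fsem (?S (L p)) \<subseteq> win (suffix p g) ?K"
  proof
    fix p assume p: "p \<in> nodes g"
    have pa: "p \<noteq> a" using wl p by auto
    show "fsem (?S (L p)) \<subseteq> win (suffix p g) ?K" using H[of p] p pa by simp
  qed
  have Eg: "fsem (?S End) \<subseteq> ?K"
  proof -
    have ld: "label d \<in> nodes d" by (rule label_in)
    have pa: "label d \<noteq> a" "label d \<notin> nodes g" using wl ld by auto
    show ?thesis using H[of "label d"] ld pa by simp
  qed
  have Fg: "win (erase g) ?K \<subseteq> win (erase (uproj g ?S)) ?K"
    by (rule F) (use wl Hg Eg in auto)
  have Pg: "\<forall>b\<in>nodes g. win (erase g) ?K \<subseteq> win (prefix (Orig b) (uproj g ?S)) (win (suffix b g) ?K)"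
    by (rule LSeq.IH(1)) (use wl Hg Eg in auto)
  have Pd: "\<forall>b\<in>nodes d. win (erase d) K \<subseteq> win (prefix (Orig b) (uproj d S)) (win (suffix b d) K)"
    by (rule LSeq.IH(2)) (use wl Hd LSeq.prems in auto)
  show ?case
  proof
    fix b assume b: "b \<in> nodes (LSeq a g d)"
    show "win (erase (LSeq a g d)) K \<subseteq> win (prefix (Orig b) (uproj (LSeq a g d) S)) (win (suffix b (LSeq a g d)) K)"
    proof (cases "b = a")
      case True then show ?thesis by simp
    next
      case ba: False
      show ?thesis
      proof (cases "b \<in> nodes g")
        case True
        then show ?thesis using Pg ba by (simp add: nodes_uproj)
      next
        case False
        then have bd: "b \<in> nodes d" using b ba by auto
        have "win (erase g) ?K \<subseteq> win (erase (uproj g ?S)) (win (prefix (Orig b) (uproj d S)) (win (suffix b d) K))"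
          using Fg win_mono[OF Pd[rule_format, OF bd], of "erase (uproj g ?S)"] by blast
        then show ?thesis using False ba by (simp add: nodes_uproj)
      qed
    qed
  qed
next
  case (LChoice a g d)
  note wl = wl_sub(2)[OF LChoice.prems(1)]
  have H: "\<And>p. p \<in> nodes (LChoice a g d) \<Longrightarrow> fsem (S (L p)) \<subseteq> win (suffix p (LChoice a g d)) K"
    using LChoice.prems(3) by blast
  have Hd: "\<forall>p\<in>nodes d. fsem (S (L p)) \<subseteq> win (suffix p d) K"
  proof
    fix p assume p: "p \<in> nodes d"
    have pa: "p \<noteq> a" "p \<notin> nodes g" using wl p by auto
    show "fsem (S (L p)) \<subseteq> win (suffix p d) K" using H[of p] p pa by simp
  qed
  have Hg: "\<forall>p\<in>nodes g. fsem (S (L p)) \<subseteq> win (suffix p g) K"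
  proof
    fix p assume p: "p \<in> nodes g"
    have pa: "p \<noteq> a" using wl p by auto
    show "fsem (S (L p)) \<subseteq> win (suffix p g) K" using H[of p] p pa by simp
  qed
  have Pg: "\<forall>b\<in>nodes g. win (erase g) K \<subseteq> win (prefix (Orig b) (uproj g S)) (win (suffix b g) K)"
    by (rule LChoice.IH(1)) (use wl Hg LChoice.prems in auto)
  have Pd: "\<forall>b\<in>nodes d. win (erase d) K \<subseteq> win (prefix (Orig b) (uproj d S)) (win (suffix b d) K)"
    by (rule LChoice.IH(2)) (use wl Hd LChoice.prems in auto)
  have sg: "fsem (S (L (label g))) \<subseteq> win (erase g) K"
    using Hg[rule_format, OF label_in[of g]] by simp
  have sd: "fsem (S (L (label d))) \<subseteq> win (erase d) K"
    using Hd[rule_format, OF label_in[of d]] by simp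
  show ?case
  proof
    fix b assume b: "b \<in> nodes (LChoice a g d)"
    show "win (erase (LChoice a g d)) K \<subseteq> win (prefix (Orig b) (uproj (LChoice a g d) S)) (win (suffix b (LChoice a g d)) K)"
    proof (cases "b = a")
      case True then show ?thesis by simp
    next
      case ba: False
      show ?thesis
      proof (cases "b \<in> nodes g")
        case True
        then show ?thesis using Pg sg ba by (auto simp add: nodes_uproj)
      next
        case False
        then have bd: "b \<in> nodes d" using b ba by auto
        then show ?thesis using Pd sd ba False by (auto simp add: nodes_uproj)
      qed
    qed
  qed
next
  case (LDChoice a g d)
  note wl = wl_sub(3)[OF LDChoice.prems(1)]
  have H: "\<And>p. p \<in> nodes (LDChoice a g d) \<Longrightarrow> fsem (S (L p)) \<subseteq> win (suffix p (LDChoice a g d)) K"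
    using LDChoice.prems(3) by blast
  have Hd: "\<forall>p\<in>nodes d. fsem (S (L p)) \<subseteq> win (suffix p d) K"
  proof
    fix p assume p: "p \<in> nodes d"
    have pa: "p \<noteq> a" "p \<notin> nodes g" using wl p by auto
    show "fsem (S (L p)) \<subseteq> win (suffix p d) K" using H[of p] p pa by simp
  qed
  have Hg: "\<forall>p\<in>nodes g. fsem (S (L p)) \<subseteq> win (suffix p g) K"
  proof
    fix p assume p: "p \<in> nodes g"
    have pa: "p \<noteq> a" using wl p by auto
    show "fsem (S (L p)) \<subseteq> win (suffix p g) K" using H[of p] p pa by simp
  qed
  have Pg: "\<forall>b\<in>nodes g. win (erase g) K \<subseteq> win (prefix (Orig b) (uproj g S)) (win (suffix b g) K)"
    by (rule LDChoice.IH(1)) (use wl Hg LDChoice.prems in auto)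
  have Pd: "\<forall>b\<in>nodes d. win (erase d) K \<subseteq> win (prefix (Orig b) (uproj d S)) (win (suffix b d) K)"
    by (rule LDChoice.IH(2)) (use wl Hd LDChoice.prems in auto)
  show ?case
  proof
    fix b assume b: "b \<in> nodes (LDChoice a g d)"
    show "win (erase (LDChoice a g d)) K \<subseteq> win (prefix (Orig b) (uproj (LDChoice a g d) S)) (win (suffix b (LDChoice a g d)) K)"
    proof (cases "b = a")
      case True then show ?thesis by simp
    next
      case ba: False
      show ?thesis
      proof (cases "b \<in> nodes g")
        case True
        then show ?thesis using Pg ba by (auto simp add: nodes_uproj)
      next
        case False
        then have bd: "b \<in> nodes d" using b ba by auto
        then show ?thesis using Pd ba False by (auto simp add: nodes_uproj)
      qed
    qed
  qed
next
  case (LStar a g)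
  note wl = wl_sub(4)[OF LStar.prems(1)]
  let ?S = "S(End := S (L a))"
  let ?W = "win (Star (erase g)) K"
  have H: "\<And>p. p \<in> nodes (LStar a g) \<Longrightarrow> fsem (S (L p)) \<subseteq> win (suffix p (LStar a g)) K"
    using LStar.prems(3) by blast
  have Hg: "\<forall>p\<in>nodes g. fsem (?S (L p)) \<subseteq> win (suffix p g) ?W"
  proof
    fix p assume p: "p \<in> nodes g"
    have pa: "p \<noteq> a" using wl p by auto
    show "fsem (?S (L p)) \<subseteq> win (suffix p g) ?W" using H[of p] p pa by simp
  qed
  have Ea: "fsem (?S End) \<subseteq> ?W" using H[of a] by simp
  have Fg: "win (erase g) ?W \<subseteq> win (erase (uproj g ?S)) ?W"
    by (rule F) (use wl Hg Ea in auto)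
  have Pg: "\<forall>b\<in>nodes g. win (erase g) ?W \<subseteq> win (prefix (Orig b) (uproj g ?S)) (win (suffix b g) ?W)"
    by (rule LStar.IH) (use wl Hg Ea in auto)
  have sg: "fsem (S (L (label g))) \<subseteq> win (erase g) ?W"
    using Hg[rule_format, OF label_in[of g]] by simp
  have body: "?W \<subseteq> win (Seq (DTest (S (L (label g)))) (erase (uproj g ?S))) ?W"
    using sg Fg by auto
  show ?case
  proof
    fix b assume b: "b \<in> nodes (LStar a g)"
    show "win (erase (LStar a g)) K \<subseteq> win (prefix (Orig b) (uproj (LStar a g) S)) (win (suffix b (LStar a g)) K)"
    proof (cases "b = a")
      case True
      have "?W \<subseteq> win (Cross (Seq (DTest (S (L (label g)))) (erase (uproj g ?S)))) ?W"
        by (rule win_Cross_coind) (use body in auto)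
      then show ?thesis using True by simp
    next
      case ba: False
      then have bg: "b \<in> nodes g" using b by auto
      have "?W \<subseteq> win (Cross (Seq (DTest (S (L (label g)))) (erase (uproj g ?S))))
               (- fsem (S (L (label g))) \<union> win (prefix (Orig b) (uproj g ?S)) (win (suffix b g) ?W))"
      proof (rule win_Cross_coind)
        show "?W \<subseteq> - fsem (S (L (label g))) \<union> win (prefix (Orig b) (uproj g ?S)) (win (suffix b g) ?W)"
          using sg Pg bg by blast
      qed (use body in auto)
      then show ?thesis using ba bg by (simp add: nodes_uproj)
    qed
  qed
next
  case (LCross a g)
  note wl = wl_sub(5)[OF LCross.prems(1)]
  let ?S = "S(End := S (L a))"
  let ?W = "win (Cross (erase g)) K"
  have H: "\<And>p. p \<in> nodes (LCross a g) \<Longrightarrow> fsem (S (L p)) \<subseteq> win (suffix p (LCross a g)) K"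
    using LCross.prems(3) by blast
  have Hg: "\<forall>p\<in>nodes g. fsem (?S (L p)) \<subseteq> win (suffix p g) ?W"
  proof
    fix p assume p: "p \<in> nodes g"
    have pa: "p \<noteq> a" using wl p by auto
    show "fsem (?S (L p)) \<subseteq> win (suffix p g) ?W" using H[of p] p pa by simp
  qed
  have Ea: "fsem (?S End) \<subseteq> ?W" using H[of a] by simp
  have Fg: "win (erase g) ?W \<subseteq> win (erase (uproj g ?S)) ?W"
    by (rule F) (use wl Hg Ea in auto)
  have Pg: "\<forall>b\<in>nodes g. win (erase g) ?W \<subseteq> win (prefix (Orig b) (uproj g ?S)) (win (suffix b g) ?W)"
    by (rule LCross.IH) (use wl Hg Ea in auto)
  have unf: "?W \<subseteq> win (erase g) ?W"
    using win_Cross_unfold[of "erase g" K] by blast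
  show ?case
  proof
    fix b assume b: "b \<in> nodes (LCross a g)"
    show "win (erase (LCross a g)) K \<subseteq> win (prefix (Orig b) (uproj (LCross a g) S)) (win (suffix b (LCross a g)) K)"
    proof (cases "b = a")
      case True
      have "?W \<subseteq> win (Cross (erase (uproj g ?S))) ?W"
        by (rule win_Cross_coind) (use unf Fg in auto)
      then show ?thesis using True by simp
    next
      case ba: False
      then have bg: "b \<in> nodes g" using b by auto
      have "?W \<subseteq> win (Cross (erase (uproj g ?S))) (win (prefix (Orig b) (uproj g ?S)) (win (suffix b g) ?W))"
        by (rule win_Cross_coind) (use unf Fg Pg bg in blast)+
      then show ?thesis using ba bg by (simp add: nodes_uproj)
    qed
  qed
qed auto


theorem mainTheorem1:
  fixes \<alpha> :: "'l lgame" and \<phi> :: fml and S :: "'l key \<Rightarrow> fml"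
  assumes "well_labeled \<alpha>"
    and "angelic_subvalue_map \<alpha> S"
    and "compatible S \<phi>"
  shows "\<forall>b\<in>nodes \<alpha>. \<forall>w. w \<in> fsem (S (L (label \<alpha>))) \<longrightarrow>
           w \<in> fsem (Dia (prefix (Orig b) (uproj \<alpha> S)) (Dia (suffix b \<alpha>) \<phi>))"
proof -
  have E: "fsem (S End) \<subseteq> fsem \<phi>"
    using assms(3) by (auto simp: compatible_def valid_def)
  have H: "\<forall>p\<in>nodes \<alpha>. fsem (S (L p)) \<subseteq> win (suffix p \<alpha>) (fsem \<phi>)"
  proof
    fix p assume p: "p \<in> nodes \<alpha>"
    have "fsem (S (L p)) \<subseteq> win (suffix p \<alpha>) (fsem (S End))"
      using assms(2) p by (auto simp: angelic_subvalue_map_def valid_def)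
    also have "\<dots> \<subseteq> win (suffix p \<alpha>) (fsem \<phi>)" by (rule win_mono[OF E])
    finally show "fsem (S (L p)) \<subseteq> win (suffix p \<alpha>) (fsem \<phi>)" .
  qed
  have start: "fsem (S (L (label \<alpha>))) \<subseteq> win (erase \<alpha>) (fsem \<phi>)"
    using H[rule_format, OF label_in[of \<alpha>]] by simp
  have Pa: "\<forall>b\<in>nodes \<alpha>. win (erase \<alpha>) (fsem \<phi>) \<subseteq> win (prefix (Orig b) (uproj \<alpha> S)) (win (suffix b \<alpha>) (fsem \<phi>))"
    by (rule P[OF assms(1) E H])
  show ?thesis using start Pa by auto
qed

end
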